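(* Let $0<\varepsilon\le1$ and let $g_0,\dots,g_n$ be non-zero matrices with entries in a local field such that $g_0\cdots g_n$ is well defined. Assume that for every $k\in\{1,\dots,n-1\}$, $\sigma(g_k)\le\varepsilon^2/12$, and that $g_k\,\mathbb{A}^\varepsilon\,g_{k+1}$ for all $k\in\{0,\dots,n-1\}$. Then for all $k\in\{1,\dots,n\}$, $g_0\cdots g_{k-1}\,\mathbb{A}^{\varepsilon/2}\,g_k\cdots g_n$.
   Context: Matrices are linear maps between spaces $\mathbb{K}^a$ normed by the Euclidean/Hermitian norm if $\mathbb{K}\in\{\mathbb{R},\mathbb{C}\}$ and the max-norm otherwise; $\|\cdot\|$ is the operator norm. $g\,\mathbb{A}^\varepsilon\,h$ means $\|gh\|\ge\varepsilon\|g\|\|h\|$. For $h\neq0$, $\sigma(h)=\|h\wedge h\|/\|h\|^2$ (ratio of second to first singular value). *)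

theory Defs
  imports "HOL-Analysis.Analysis"
begin

datatype nkind = Herm | MaxN

definition vnorm :: "nkind \<Rightarrow> ('a \<Rightarrow> real) \<Rightarrow> 'i set \<Rightarrow> ('i \<Rightarrow> 'a) \<Rightarrow> real" where
  "vnorm kind absv I x =
     (case kind of
        Herm \<Rightarrow> sqrt (\<Sum>i\<in>I. (absv (x i))\<^sup>2)
      | MaxN \<Rightarrow> Max (insert 0 ((\<lambda>i. absv (x i)) ` I)))"

definition opnorm :: "nkind \<Rightarrow> ('a::comm_ring_1 \<Rightarrow> real) \<Rightarrow> 'i set \<Rightarrow> 'j set \<Rightarrow> ('i \<Rightarrow> 'j \<Rightarrow> 'a) \<Rightarrow> real" where
  "opnorm kind absv I J A =
     Sup {vnorm kind absv I (\<lambda>i. \<Sum>j\<in>J. A i j * x j) | x. vnorm kind absv J x \<le> 1}"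

definition mnorm :: "nkind \<Rightarrow> ('a::comm_ring_1 \<Rightarrow> real) \<Rightarrow> nat \<Rightarrow> nat \<Rightarrow> (nat \<Rightarrow> nat \<Rightarrow> 'a) \<Rightarrow> real" where
  "mnorm kind absv r c A = opnorm kind absv {..<r} {..<c} A"

text \<open>Second exterior power: basis \<open>e_i \<and> e_j\<close>, \<open>i < j\<close>; matrix of \<open>A \<and> A\<close> = 2x2 minors.\<close>
definition pairs :: "nat \<Rightarrow> (nat \<times> nat) set" where
  "pairs n = {(i, j). i < j \<and> j < n}"

definition compound2 :: "(nat \<Rightarrow> nat \<Rightarrow> 'a::comm_ring_1) \<Rightarrow> (nat \<times> nat) \<Rightarrow> (nat \<times> nat) \<Rightarrow> 'a" where
  "compound2 A p q = A (fst p) (fst q) * A (snd p) (snd q) - A (fst p) (snd q) * A (snd p) (fst q)"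

definition wnorm :: "nkind \<Rightarrow> ('a::comm_ring_1 \<Rightarrow> real) \<Rightarrow> nat \<Rightarrow> nat \<Rightarrow> (nat \<Rightarrow> nat \<Rightarrow> 'a) \<Rightarrow> real" where
  "wnorm kind absv r c A = opnorm kind absv (pairs r) (pairs c) (compound2 A)"

definition sigma :: "nkind \<Rightarrow> ('a::comm_ring_1 \<Rightarrow> real) \<Rightarrow> nat \<Rightarrow> nat \<Rightarrow> (nat \<Rightarrow> nat \<Rightarrow> 'a) \<Rightarrow> real" where
  "sigma kind absv r c A = wnorm kind absv r c A / (mnorm kind absv r c A)\<^sup>2"

definition mmult :: "nat \<Rightarrow> (nat \<Rightarrow> nat \<Rightarrow> 'a::comm_ring_1) \<Rightarrow> (nat \<Rightarrow> nat \<Rightarrow> 'a) \<Rightarrow> nat \<Rightarrow> nat \<Rightarrow> 'a" where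
  "mmult m A B = (\<lambda>i j. \<Sum>k<m. A i k * B k j)"

definition nonzero_mat :: "nat \<Rightarrow> nat \<Rightarrow> (nat \<Rightarrow> nat \<Rightarrow> 'a::zero) \<Rightarrow> bool" where
  "nonzero_mat r c A \<longleftrightarrow> (\<exists>i<r. \<exists>j<c. A i j \<noteq> 0)"

definition aligned :: "nkind \<Rightarrow> ('a::comm_ring_1 \<Rightarrow> real) \<Rightarrow> real \<Rightarrow> nat \<Rightarrow> nat \<Rightarrow> nat \<Rightarrow>
    (nat \<Rightarrow> nat \<Rightarrow> 'a) \<Rightarrow> (nat \<Rightarrow> nat \<Rightarrow> 'a) \<Rightarrow> bool" where
  "aligned kind absv \<epsilon> r m c g h \<longleftrightarrow>
     mnorm kind absv r c (mmult m g h) \<ge> \<epsilon> * mnorm kind absv r m g * mnorm kind absv m c h"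

text \<open>Chain product \<open>g_a g_(a+1) \<cdots> g_(a+l)\<close>, where \<open>g k\<close> is a \<open>d k \<times> d (k+1)\<close> matrix.\<close>
fun cprod :: "(nat \<Rightarrow> nat \<Rightarrow> nat \<Rightarrow> 'a::comm_ring_1) \<Rightarrow> (nat \<Rightarrow> nat) \<Rightarrow> nat \<Rightarrow> nat \<Rightarrow> nat \<Rightarrow> nat \<Rightarrow> 'a" where
  "cprod g d a 0 = g a"
| "cprod g d a (Suc l) = mmult (d (a + Suc l)) (cprod g d a l) (g (a + Suc l))"

text \<open>Non-archimedean local field: a field with a nontrivial ultrametric absolute value,
  complete and locally compact (closed unit ball sequentially compact).\<close>
definition na_local_field :: "('b::field \<Rightarrow> real) \<Rightarrow> bool" where
  "na_local_field v \<longleftrightarrow>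
     (\<forall>x. v x \<ge> 0) \<and> (\<forall>x. v x = 0 \<longleftrightarrow> x = 0) \<and> (\<forall>x y. v (x * y) = v x * v y) \<and>
     (\<forall>x y. v (x + y) \<le> max (v x) (v y)) \<and> (\<exists>x. v x \<noteq> 0 \<and> v x \<noteq> 1) \<and>
     (\<forall>s. (\<forall>e::real>0. \<exists>N::nat. \<forall>m\<ge>N. \<forall>n\<ge>N. v (s m - s n) < e) \<longrightarrow>
          (\<exists>L. (\<lambda>n. v (s n - L)) \<longlonglongrightarrow> 0)) \<and>
     (\<forall>s. (\<forall>n. v (s n) \<le> 1) \<longrightarrow>
          (\<exists>(r::nat\<Rightarrow>nat) L. strict_mono r \<and> (\<lambda>n. v (s (r n) - L)) \<longlonglongrightarrow> 0))"

definition lemma2p15_claim :: "nkind \<Rightarrow> ('a::comm_ring_1 \<Rightarrow> real) \<Rightarrow> bool" where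
  "lemma2p15_claim kind absv \<longleftrightarrow>
    (\<forall>(\<epsilon>::real) (n::nat) (d::nat \<Rightarrow> nat) (g::nat \<Rightarrow> nat \<Rightarrow> nat \<Rightarrow> 'a).
       0 < \<epsilon> \<and> \<epsilon> \<le> 1 \<and>
       (\<forall>k\<le>n. nonzero_mat (d k) (d (Suc k)) (g k)) \<and>
       (\<forall>k. 1 \<le> k \<and> k \<le> n - 1 \<longrightarrow> sigma kind absv (d k) (d (Suc k)) (g k) \<le> \<epsilon>\<^sup>2 / 12) \<and>
       (\<forall>k<n. aligned kind absv \<epsilon> (d k) (d (Suc k)) (d (Suc (Suc k))) (g k) (g (Suc k)))
       \<longrightarrow>
       (\<forall>k. 1 \<le> k \<and> k \<le> n \<longrightarrow>
          aligned kind absv (\<epsilon> / 2) (d 0) (d k) (d (Suc n))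
            (cprod g d 0 (k - 1)) (cprod g d k (n - k))))"

end

theory Submission
  imports Defs
begin

definition rn :: "nkind \<Rightarrow> 'i set \<Rightarrow> ('i \<Rightarrow> real) \<Rightarrow> real" where
  "rn kind I f = (case kind of Herm \<Rightarrow> L2_set f I | MaxN \<Rightarrow> Max (insert 0 (f ` I)))"

lemma vnorm_rn: "vnorm kind absv I x = rn kind I (\<lambda>i. absv (x i))"
  by (cases kind) (simp_all add: vnorm_def rn_def L2_set_def)

lemma maxn_le_iff: "finite I \<Longrightarrow> Max (insert 0 (f ` I)) \<le> (t::real) \<longleftrightarrow> 0 \<le> t \<and> (\<forall>i\<in>I. f i \<le> t)"
  by (simp add: Max_le_iff)

lemma maxn_ge: "finite I \<Longrightarrow> i \<in> I \<Longrightarrow> f i \<le> Max (insert 0 (f ` I))"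
  by (simp add: Max_ge_iff)

lemma maxn_nonneg: "finite I \<Longrightarrow> (0::real) \<le> Max (insert 0 (f ` I))"
  by (simp add: Max_ge_iff)

lemma maxn_cases: "finite I \<Longrightarrow> Max (insert 0 (f ` I)) = (0::real) \<or> (\<exists>i\<in>I. Max (insert 0 (f ` I)) = f i)"
proof -
  assume "finite I"
  then have "Max (insert 0 (f ` I)) \<in> insert 0 (f ` I)" by (intro Max_in) auto
  then show ?thesis by auto
qed

lemma rn_nonneg: "finite I \<Longrightarrow> 0 \<le> rn k I f"
  by (cases k) (simp_all add: rn_def maxn_nonneg)

lemma rn_ge: "finite I \<Longrightarrow> i \<in> I \<Longrightarrow> f i \<le> rn k I f"
  by (cases k) (simp_all add: rn_def maxn_ge member_le_L2_set)

lemma rn_le_sum: "finite I \<Longrightarrow> (\<And>i. i \<in> I \<Longrightarrow> 0 \<le> f i) \<Longrightarrow> rn k I f \<le> sum f I"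
proof (cases k)
  case Herm
  assume "finite I" "\<And>i. i \<in> I \<Longrightarrow> 0 \<le> f i"
  then show ?thesis using Herm by (simp add: rn_def L2_set_le_sum)
next
  case MaxN
  assume a: "finite I" "\<And>i. i \<in> I \<Longrightarrow> 0 \<le> f i"
  then show ?thesis using MaxN by (simp add: rn_def maxn_le_iff sum_nonneg) (auto intro!: member_le_sum a)
qed

lemma rn_mono: "finite I \<Longrightarrow> (\<And>i. i \<in> I \<Longrightarrow> 0 \<le> f i \<and> f i \<le> g i) \<Longrightarrow> rn k I f \<le> rn k I g"
proof (cases k)
  case Herm
  assume "finite I" "\<And>i. i \<in> I \<Longrightarrow> 0 \<le> f i \<and> f i \<le> g i"
  then show ?thesis using Herm by (simp add: rn_def L2_set_mono)
next
  case MaxN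
  assume a: "finite I" "\<And>i. i \<in> I \<Longrightarrow> 0 \<le> f i \<and> f i \<le> g i"
  then show ?thesis using MaxN
    by (simp add: rn_def maxn_le_iff maxn_nonneg) (meson a(2) maxn_ge order_trans)
qed

lemma rn_triangle: "finite I \<Longrightarrow> (\<And>i. i \<in> I \<Longrightarrow> 0 \<le> f i \<and> 0 \<le> g i) \<Longrightarrow>
   rn k I (\<lambda>i. f i + g i) \<le> rn k I f + rn k I g"
proof (cases k)
  case Herm
  assume "finite I"
  then show ?thesis using Herm by (simp add: rn_def L2_set_triangle_ineq)
next
  case MaxN
  assume a: "finite I" "\<And>i. i \<in> I \<Longrightarrow> 0 \<le> f i \<and> 0 \<le> g i"
  then show ?thesis using MaxN
    by (simp add: rn_def maxn_le_iff maxn_nonneg add_mono maxn_ge add_nonneg_nonneg)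
qed

lemma rn_cong: "(\<And>i. i \<in> I \<Longrightarrow> f i = g i) \<Longrightarrow> rn k I f = rn k I g"
  by (cases k) (simp_all add: rn_def cong: L2_set_cong image_cong)

lemma rn_scale: "finite I \<Longrightarrow> 0 \<le> c \<Longrightarrow> (\<And>i. i \<in> I \<Longrightarrow> 0 \<le> f i) \<Longrightarrow>
   rn k I (\<lambda>i. c * f i) = c * rn k I f"
proof (cases k)
  case Herm
  assume "finite I" "0 \<le> c"
  then show ?thesis using Herm by (simp add: rn_def L2_set_right_distrib)
next
  case MaxN
  assume a: "finite I" "0 \<le> c" "\<And>i. i \<in> I \<Longrightarrow> 0 \<le> f i"
  have le: "rn k I (\<lambda>i. c * f i) \<le> c * rn k I f"
    using a MaxN by (simp add: rn_def maxn_le_iff maxn_nonneg maxn_ge mult_left_mono)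
  have ge: "c * rn k I f \<le> rn k I (\<lambda>i. c * f i)"
    using maxn_cases[OF a(1), of f]
  proof
    assume "Max (insert 0 (f ` I)) = 0"
    then show ?thesis using MaxN a by (simp add: rn_def maxn_nonneg)
  next
    assume "\<exists>i\<in>I. Max (insert 0 (f ` I)) = f i"
    then obtain i where "i \<in> I" "Max (insert 0 (f ` I)) = f i" by blast
    then show ?thesis using MaxN a maxn_ge[OF a(1) \<open>i \<in> I\<close>, of "\<lambda>i. c * f i"] by (simp add: rn_def)
  qed
  from le ge show ?thesis by simp
qed


lemma rn_prod:
  assumes fA: "finite A" and fB: "finite B" and na: "\<And>i. i \<in> A \<Longrightarrow> 0 \<le> a i"
    and nb: "\<And>j. j \<in> B \<Longrightarrow> 0 \<le> b j"
  shows "rn k (A \<times> B) (\<lambda>p. a (fst p) * b (snd p)) = rn k A a * rn k B b"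
proof (cases k)
  case Herm
  have "(\<Sum>p\<in>A \<times> B. (a (fst p) * b (snd p))\<^sup>2) = (\<Sum>x\<in>A. (a x)\<^sup>2) * (\<Sum>y\<in>B. (b y)\<^sup>2)"
    by (simp add: sum_product sum.cartesian_product power_mult_distrib case_prod_beta')
  then show ?thesis using Herm by (simp add: rn_def L2_set_def real_sqrt_mult)
next
  case MaxN
  have fAB: "finite (A \<times> B)" using fA fB by simp
  have le: "rn k (A \<times> B) (\<lambda>p. a (fst p) * b (snd p)) \<le> rn k A a * rn k B b"
    unfolding rn_def MaxN nkind.case maxn_le_iff[OF fAB]
    using maxn_nonneg[OF fA, of a] maxn_nonneg[OF fB, of b] maxn_ge[OF fA, of _ a] maxn_ge[OF fB, of _ b] na nb
    by (auto intro!: mult_mono)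
  have ge: "rn k A a * rn k B b \<le> rn k (A \<times> B) (\<lambda>p. a (fst p) * b (snd p))"
  proof -
    have z: "0 \<le> rn k (A \<times> B) (\<lambda>p. a (fst p) * b (snd p))" by (rule rn_nonneg[OF fAB])
    show ?thesis
    using maxn_cases[OF fA, of a]
    proof
      assume "Max (insert 0 (a ` A)) = 0"
      then show ?thesis using z MaxN by (simp add: rn_def)
    next
      assume "\<exists>i\<in>A. Max (insert 0 (a ` A)) = a i"
      then obtain i where i: "i \<in> A" "Max (insert 0 (a ` A)) = a i" by blast
      show ?thesis using maxn_cases[OF fB, of b]
      proof
        assume "Max (insert 0 (b ` B)) = 0"
        then show ?thesis using z MaxN by (simp add: rn_def)
      next
        assume "\<exists>j\<in>B. Max (insert 0 (b ` B)) = b j"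
        then obtain j where j: "j \<in> B" "Max (insert 0 (b ` B)) = b j" by blast
        have "(i, j) \<in> A \<times> B" using i j by simp
        from rn_ge[OF fAB this, of "\<lambda>p. a (fst p) * b (snd p)" k]
        show ?thesis using i j MaxN by (simp add: rn_def)
      qed
    qed
  qed
  from le ge show ?thesis by simp
qed

lemma rn_col:
  assumes fA: "finite A" and fB: "finite B" and fC: "finite C" and K: "0 \<le> K"
    and nF: "\<And>p. p \<in> A \<times> C \<Longrightarrow> 0 \<le> F p" and nG: "\<And>p. p \<in> B \<times> C \<Longrightarrow> 0 \<le> G p"
    and col: "\<And>c. c \<in> C \<Longrightarrow> rn k A (\<lambda>a. F (a, c)) \<le> K * rn k B (\<lambda>b. G (b, c))"
  shows "rn k (A \<times> C) F \<le> K * rn k (B \<times> C) G"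
proof (cases k)
  case Herm
  have eF: "(\<Sum>p\<in>A \<times> C. (F p)\<^sup>2) = (\<Sum>c\<in>C. (rn k A (\<lambda>a. F (a, c)))\<^sup>2)"
  proof -
    have "(\<Sum>p\<in>A \<times> C. (F p)\<^sup>2) = (\<Sum>a\<in>A. \<Sum>c\<in>C. (F (a,c))\<^sup>2)"
      by (simp add: sum.cartesian_product)
    also have "\<dots> = (\<Sum>c\<in>C. \<Sum>a\<in>A. (F (a,c))\<^sup>2)" by (rule sum.swap)
    also have "\<dots> = (\<Sum>c\<in>C. (rn k A (\<lambda>a. F (a, c)))\<^sup>2)"
      using Herm by (simp add: rn_def L2_set_def sum_nonneg)
    finally show ?thesis .
  qed
  have eG: "(\<Sum>p\<in>B \<times> C. (G p)\<^sup>2) = (\<Sum>c\<in>C. (rn k B (\<lambda>b. G (b, c)))\<^sup>2)"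
  proof -
    have "(\<Sum>p\<in>B \<times> C. (G p)\<^sup>2) = (\<Sum>a\<in>B. \<Sum>c\<in>C. (G (a,c))\<^sup>2)"
      by (simp add: sum.cartesian_product)
    also have "\<dots> = (\<Sum>c\<in>C. \<Sum>a\<in>B. (G (a,c))\<^sup>2)" by (rule sum.swap)
    also have "\<dots> = (\<Sum>c\<in>C. (rn k B (\<lambda>b. G (b, c)))\<^sup>2)"
      using Herm by (simp add: rn_def L2_set_def sum_nonneg)
    finally show ?thesis .
  qed
  have "(\<Sum>c\<in>C. (rn k A (\<lambda>a. F (a, c)))\<^sup>2) \<le> (\<Sum>c\<in>C. K\<^sup>2 * (rn k B (\<lambda>b. G (b, c)))\<^sup>2)"
  proof (rule sum_mono)
    fix c assume "c \<in> C"
    have "(rn k A (\<lambda>a. F (a, c)))\<^sup>2 \<le> (K * rn k B (\<lambda>b. G (b, c)))\<^sup>2"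
      using col[OF \<open>c \<in> C\<close>] rn_nonneg[OF fA] by (intro power_mono) auto
    then show "(rn k A (\<lambda>a. F (a, c)))\<^sup>2 \<le> K\<^sup>2 * (rn k B (\<lambda>b. G (b, c)))\<^sup>2"
      by (simp add: power_mult_distrib)
  qed
  then have "(\<Sum>p\<in>A \<times> C. (F p)\<^sup>2) \<le> K\<^sup>2 * (\<Sum>p\<in>B \<times> C. (G p)\<^sup>2)"
    using eF eG by (simp add: sum_distrib_left)
  then have "sqrt (\<Sum>p\<in>A \<times> C. (F p)\<^sup>2) \<le> sqrt (K\<^sup>2 * (\<Sum>p\<in>B \<times> C. (G p)\<^sup>2))"
    by (rule real_sqrt_le_mono)
  then show ?thesis using Herm K by (simp add: rn_def L2_set_def real_sqrt_mult)
next
  case MaxN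
  have fAC: "finite (A \<times> C)" and fBC: "finite (B \<times> C)" using fA fB fC by auto
  have "\<forall>p\<in>A \<times> C. F p \<le> K * rn k (B \<times> C) G"
  proof
    fix p assume p: "p \<in> A \<times> C"
    obtain a c where pe: "p = (a, c)" and a: "a \<in> A" and c: "c \<in> C" using p by auto
    have "F p \<le> rn k A (\<lambda>a. F (a, c))" using rn_ge[OF fA a, of "\<lambda>a. F (a, c)"] pe by simp
    also have "\<dots> \<le> K * rn k B (\<lambda>b. G (b, c))" by (rule col[OF c])
    also have "rn k B (\<lambda>b. G (b, c)) \<le> rn k (B \<times> C) G"
      using MaxN fB fC c nG unfolding rn_def nkind.case maxn_le_iff[OF fB]
      by (auto simp: maxn_nonneg[OF fBC] intro!: maxn_ge[OF fBC])
    then have "K * rn k B (\<lambda>b. G (b, c)) \<le> K * rn k (B \<times> C) G" using K by (rule mult_left_mono)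
    finally show "F p \<le> K * rn k (B \<times> C) G" .
  qed
  moreover have "0 \<le> K * rn k (B \<times> C) G" using K rn_nonneg[OF fBC, of k G] by simp
  ultimately have "Max (insert 0 (F ` (A \<times> C))) \<le> K * rn k (B \<times> C) G"
    using maxn_le_iff[OF fAC, of F] by blast
  then show ?thesis using MaxN by (simp add: rn_def)
qed


lemma sq_decomp: "{..<m} \<times> {..<m} = pairs m \<union> prod.swap ` pairs m \<union> (\<lambda>b. (b, b)) ` {..<m}"
proof (rule set_eqI)
  fix p :: "nat \<times> nat"
  obtain a c where p: "p = (a, c)" by fastforce
  show "p \<in> {..<m} \<times> {..<m} \<longleftrightarrow> p \<in> pairs m \<union> prod.swap ` pairs m \<union> (\<lambda>b. (b, b)) ` {..<m}"
  proof
    assume "p \<in> {..<m} \<times> {..<m}"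
    then have "a < m" "c < m" using p by auto
    moreover have "a < c \<or> c < a \<or> a = c" by arith
    ultimately show "p \<in> pairs m \<union> prod.swap ` pairs m \<union> (\<lambda>b. (b, b)) ` {..<m}"
      using p unfolding pairs_def by (auto simp: image_iff)
  qed (auto simp: pairs_def p)
qed

lemma finite_pairs[simp]: "finite (pairs m)"
proof -
  have "pairs m \<subseteq> {..<m} \<times> {..<m}" by (auto simp: pairs_def)
  then show ?thesis by (rule finite_subset) simp
qed

lemma sq_split:
  fixes G :: "nat \<times> nat \<Rightarrow> 'a::comm_monoid_add"
  shows "(\<Sum>p\<in>{..<m} \<times> {..<m}. G p) = (\<Sum>p\<in>pairs m. G p + G (snd p, fst p)) + (\<Sum>b<m. G (b, b))"
proof -
  have d1: "pairs m \<inter> prod.swap ` pairs m = {}" by (auto simp: pairs_def)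
  have d2: "(pairs m \<union> prod.swap ` pairs m) \<inter> (\<lambda>b. (b, b)) ` {..<m} = {}" by (auto simp: pairs_def)
  have "(\<Sum>p\<in>{..<m} \<times> {..<m}. G p) = (\<Sum>p\<in>pairs m \<union> prod.swap ` pairs m. G p) + (\<Sum>p\<in>(\<lambda>b. (b, b)) ` {..<m}. G p)"
    unfolding sq_decomp by (rule sum.union_disjoint) (use d2 in auto)
  also have "(\<Sum>p\<in>pairs m \<union> prod.swap ` pairs m. G p) = (\<Sum>p\<in>pairs m. G p) + (\<Sum>p\<in>prod.swap ` pairs m. G p)"
    by (rule sum.union_disjoint) (use d1 in auto)
  also have "(\<Sum>p\<in>prod.swap ` pairs m. G p) = (\<Sum>p\<in>pairs m. G (snd p, fst p))"
    by (subst sum.reindex) (auto simp: comp_def prod.swap_def)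
  also have "(\<Sum>p\<in>(\<lambda>b. (b, b)) ` {..<m}. G p) = (\<Sum>b<m. G (b, b))"
    by (subst sum.reindex) (auto simp: inj_on_def)
  finally show ?thesis by (simp add: sum.distrib)
qed

definition kap :: "nkind \<Rightarrow> real" where "kap k = (case k of Herm \<Rightarrow> sqrt 2 | MaxN \<Rightarrow> 1)"
definition kap' :: "nkind \<Rightarrow> real" where "kap' k = (case k of Herm \<Rightarrow> sqrt 2 | MaxN \<Rightarrow> 2)"

lemma kap_prod: "kap k * kap' k = 2" "0 \<le> kap k" "0 \<le> kap' k"
  by (cases k; simp add: kap_def kap'_def)+

lemma rn_antisym:
  assumes nn: "\<And>p. 0 \<le> f p" and sym: "\<And>a c. f (a, c) = f (c, a)" and dg: "\<And>a. f (a, a) = 0"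
  shows "rn k ({..<m} \<times> {..<m}) f \<le> kap k * rn k (pairs m) f"
proof (cases k)
  case Herm
  have "(\<Sum>p\<in>{..<m} \<times> {..<m}. (f p)\<^sup>2) = (\<Sum>p\<in>pairs m. (f p)\<^sup>2 + (f (snd p, fst p))\<^sup>2) + (\<Sum>b<m. (f (b, b))\<^sup>2)"
    by (rule sq_split)
  also have "\<dots> = 2 * (\<Sum>p\<in>pairs m. (f p)\<^sup>2)"
    using sym dg by (simp add: sum_distrib_left case_prod_beta' mult_2[symmetric])
  finally show ?thesis using Herm by (simp add: rn_def kap_def L2_set_def real_sqrt_mult)
next
  case MaxN
  have fs: "finite ({..<m} \<times> {..<m})" by simp
  have "\<forall>p\<in>{..<m} \<times> {..<m}. f p \<le> rn k (pairs m) f"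
  proof
    fix p assume p: "p \<in> {..<m} \<times> {..<m}"
    obtain a c where pe: "p = (a, c)" and a: "a < m" and c: "c < m" using p by auto
    consider "a < c" | "c < a" | "a = c" by arith
    then show "f p \<le> rn k (pairs m) f"
    proof cases
      case 1
      then have "(a, c) \<in> pairs m" using c by (simp add: pairs_def)
      then show ?thesis using rn_ge[of "pairs m" "(a,c)" f k] pe by simp
    next
      case 2
      then have "(c, a) \<in> pairs m" using a by (simp add: pairs_def)
      then show ?thesis using rn_ge[of "pairs m" "(c,a)" f k] pe sym[of a c] by simp
    next
      case 3
      then show ?thesis using pe dg rn_nonneg[of "pairs m" k f] by simp
    qed
  qed
  moreover have "0 \<le> rn k (pairs m) f" by (rule rn_nonneg) simp
  ultimately have "Max (insert 0 (f ` ({..<m} \<times> {..<m}))) \<le> rn k (pairs m) f"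
    using maxn_le_iff[OF fs, of f] by blast
  then show ?thesis using MaxN by (simp add: rn_def kap_def)
qed

definition mv :: "'j set \<Rightarrow> ('i \<Rightarrow> 'j \<Rightarrow> 'a::comm_ring_1) \<Rightarrow> ('j \<Rightarrow> 'a) \<Rightarrow> 'i \<Rightarrow> 'a" where
  "mv J A x = (\<lambda>i. \<Sum>j\<in>J. A i j * x j)"

lemma mv_mmult: "mv J (mmult m A B) x = mv {..<m} A (mv J B x)"
  unfolding mv_def mmult_def
  by (rule ext) (simp add: sum_distrib_left sum_distrib_right mult.assoc sum.swap[of _ J])

lemma mmult_assoc: "mmult m2 (mmult m1 A B) C = mmult m1 A (mmult m2 B C)"
  unfolding mmult_def
  by (intro ext) (simp add: sum_distrib_left sum_distrib_right mult.assoc sum.swap[of _ "{..<m2}"])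

lemma mv_scale: "mv J A (\<lambda>j. c * x j) = (\<lambda>i. c * mv J A x i)"
  unfolding mv_def by (rule ext) (simp add: sum_distrib_left mult.left_commute)


locale absval =
  fixes kind :: nkind and absv :: "'a::comm_ring_1 \<Rightarrow> real"
  assumes av_nonneg: "0 \<le> absv x"
    and av_zero: "absv x = 0 \<longleftrightarrow> x = 0"
    and av_mult: "absv (x * y) = absv x * absv y"
    and av_tri: "absv (x + y) \<le> absv x + absv y"
    and av_herm_scale: "kind = Herm \<Longrightarrow> 0 < r \<Longrightarrow> \<exists>c. absv c = r"
    and av_maxn_inv: "kind = MaxN \<Longrightarrow> x \<noteq> 0 \<Longrightarrow> \<exists>c. absv c * absv x = 1"
begin

lemma av_one: "absv 1 = 1"
proof -
  have "absv 1 = absv 1 * absv 1" using av_mult[of 1 1] by simp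
  moreover have "absv 1 \<noteq> 0" using av_zero[of 1] by simp
  ultimately show ?thesis by simp
qed

lemma av_0[simp]: "absv 0 = 0" using av_zero by simp

lemma av_minus: "absv (- x) = absv x"
proof -
  have "absv (-1) * absv (-1) = 1" using av_mult[of "-1" "-1"] av_one by simp
  then have "(absv (-1) - 1) * (absv (-1) + 1) = 0" by (simp add: algebra_simps)
  moreover have "absv (-1) + 1 \<noteq> 0" using av_nonneg[of "-1"] by simp
  ultimately have "absv (-1) = 1" by simp
  then show ?thesis using av_mult[of "-1" x] by simp
qed

lemma av_diff: "absv (x - y) \<le> absv x + absv y"
  using av_tri[of x "-y"] av_minus[of y] by simp

lemma av_sum: "absv (sum f S) \<le> (\<Sum>i\<in>S. absv (f i))"
proof (induction S rule: infinite_finite_induct)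
  case (insert a A)
  then show ?case using av_tri[of "f a" "sum f A"] by simp
qed simp_all

abbreviation vn :: "'i set \<Rightarrow> ('i \<Rightarrow> 'a) \<Rightarrow> real" where "vn I x \<equiv> vnorm kind absv I x"
abbreviation opn :: "'i set \<Rightarrow> 'j set \<Rightarrow> ('i \<Rightarrow> 'j \<Rightarrow> 'a) \<Rightarrow> real" where "opn I J A \<equiv> opnorm kind absv I J A"

lemma vn_nonneg: "finite I \<Longrightarrow> 0 \<le> vn I x"
  by (simp add: vnorm_rn rn_nonneg)

lemma vn_ge: "finite I \<Longrightarrow> i \<in> I \<Longrightarrow> absv (x i) \<le> vn I x"
  unfolding vnorm_rn by (rule rn_ge[of I i "\<lambda>i. absv (x i)"])

lemma vn_le_sum: "finite I \<Longrightarrow> vn I x \<le> (\<Sum>i\<in>I. absv (x i))"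
  by (simp add: vnorm_rn rn_le_sum av_nonneg)

lemma vn_scale: "finite I \<Longrightarrow> vn I (\<lambda>i. c * x i) = absv c * vn I x"
  by (simp add: vnorm_rn av_mult rn_scale av_nonneg)

lemma vn_cong: "(\<And>i. i \<in> I \<Longrightarrow> x i = y i) \<Longrightarrow> vn I x = vn I y"
  unfolding vnorm_rn by (rule rn_cong) simp

lemma vn_zero: "finite I \<Longrightarrow> vn I (\<lambda>i. 0) = 0"
  using vn_le_sum[of I "\<lambda>i. 0"] vn_nonneg[of I "\<lambda>i. 0"] by simp

lemma vn_unit: assumes "finite I" "0 < vn I x" shows "\<exists>c. absv c * vn I x = 1"
proof (cases kind)
  case Herm
  then obtain c where "absv c = 1 / vn I x" using av_herm_scale assms(2) by force
  then have "absv c * vn I x = 1" using assms(2) by auto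
  then show ?thesis by blast
next
  case MaxN
  then have e: "vn I x = Max (insert 0 ((\<lambda>i. absv (x i)) ` I))" by (simp add: vnorm_rn rn_def)
  show ?thesis using maxn_cases[OF assms(1), of "\<lambda>i. absv (x i)"]
  proof
    assume "Max (insert 0 ((\<lambda>i. absv (x i)) ` I)) = 0" then show ?thesis using e assms by simp
  next
    assume "\<exists>i\<in>I. Max (insert 0 ((\<lambda>i. absv (x i)) ` I)) = absv (x i)"
    then obtain i where i: "vn I x = absv (x i)" using e by auto
    then have "x i \<noteq> 0" using assms(2) by auto
    then show ?thesis using av_maxn_inv[OF MaxN] i by metis
  qed
qed

lemma mv_abs: "absv (mv J A x i) \<le> (\<Sum>j\<in>J. absv (A i j) * absv (x j))"
  unfolding mv_def using av_sum[of "\<lambda>j. A i j * x j" J] by (simp add: av_mult)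

lemma op_bdd: assumes fI: "finite I" and fJ: "finite J"
  shows "bdd_above {vn I (mv J A x) | x. vn J x \<le> 1}"
proof (rule bdd_aboveI)
  fix r assume "r \<in> {vn I (mv J A x) | x. vn J x \<le> 1}"
  then obtain x where r: "r = vn I (mv J A x)" and x: "vn J x \<le> 1" by auto
  have "r \<le> (\<Sum>i\<in>I. absv (mv J A x i))" using r vn_le_sum[OF fI] by simp
  also have "\<dots> \<le> (\<Sum>i\<in>I. \<Sum>j\<in>J. absv (A i j))"
  proof (rule sum_mono)
    fix i assume "i \<in> I"
    have "absv (mv J A x i) \<le> (\<Sum>j\<in>J. absv (A i j) * absv (x j))" by (rule mv_abs)
    also have "\<dots> \<le> (\<Sum>j\<in>J. absv (A i j))"
    proof (rule sum_mono)
      fix j assume "j \<in> J"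
      have "absv (x j) \<le> 1" using vn_ge[OF fJ \<open>j \<in> J\<close>, of x] x by simp
      then show "absv (A i j) * absv (x j) \<le> absv (A i j)"
        using av_nonneg[of "A i j"] by (simp add: mult_left_le)
    qed
    finally show "absv (mv J A x i) \<le> (\<Sum>j\<in>J. absv (A i j))" .
  qed
  finally show "r \<le> (\<Sum>i\<in>I. \<Sum>j\<in>J. absv (A i j))" .
qed

lemma op_ge: "finite I \<Longrightarrow> finite J \<Longrightarrow> vn J x \<le> 1 \<Longrightarrow> vn I (mv J A x) \<le> opn I J A"
  unfolding opnorm_def mv_def[symmetric] by (rule cSup_upper) (auto intro: op_bdd)

lemma op_nonneg: assumes "finite I" "finite J" shows "0 \<le> opn I J A"
proof -
  have "vn I (mv J A (\<lambda>j. 0)) \<le> opn I J A" using assms by (intro op_ge) (simp_all add: vn_zero)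
  moreover have "mv J A (\<lambda>j. 0) = (\<lambda>i. 0)" by (simp add: mv_def)
  ultimately show ?thesis using vn_zero[OF assms(1)] by simp
qed

lemma op_least: assumes "finite I" "finite J" "\<And>x. vn J x \<le> 1 \<Longrightarrow> vn I (mv J A x) \<le> K"
  shows "opn I J A \<le> K"
  unfolding opnorm_def mv_def[symmetric]
proof (rule cSup_least)
  have "vn J (\<lambda>i. 0) \<le> 1" using vn_zero[OF assms(2)] by simp
  then show "{vn I (mv J A x) |x. vn J x \<le> 1} \<noteq> {}" by blast
qed (use assms(3) in auto)

lemma op_bound: assumes fI: "finite I" and fJ: "finite J"
  shows "vn I (mv J A x) \<le> opn I J A * vn J x"
proof (cases "vn J x = 0")
  case True
  then have "\<And>j. j \<in> J \<Longrightarrow> absv (x j) = 0" using vn_ge[OF fJ, of _ x] av_nonneg by (metis order_antisym)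
  then have "\<And>i. absv (mv J A x i) \<le> 0" using mv_abs[of J A x] by (metis (no_types, lifting) mult_zero_right sum.neutral)
  then have "vn I (mv J A x) \<le> 0" using vn_le_sum[OF fI, of "mv J A x"] sum_nonpos[of I "\<lambda>i. absv (mv J A x i)"]
    by (meson order_trans)
  then show ?thesis using True by simp
next
  case False
  then have pos: "0 < vn J x" using vn_nonneg[OF fJ, of x] by simp
  obtain c where c: "absv c * vn J x = 1" using vn_unit[OF fJ pos] by blast
  have "vn J (\<lambda>j. c * x j) \<le> 1" using c vn_scale[OF fJ] by simp
  then have "vn I (mv J A (\<lambda>j. c * x j)) \<le> opn I J A" by (rule op_ge[OF fI fJ])
  then have "absv c * vn I (mv J A x) \<le> opn I J A" by (simp add: mv_scale vn_scale[OF fI])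
  then have "absv c * vn I (mv J A x) * vn J x \<le> opn I J A * vn J x" using pos by simp
  then have "(absv c * vn J x) * vn I (mv J A x) \<le> opn I J A * vn J x" by (simp add: algebra_simps)
  then show ?thesis using c by simp
qed

lemma op_entry: assumes fI: "finite I" and fJ: "finite J" and i: "i \<in> I" and j: "j \<in> J"
  shows "absv (A i j) \<le> opn I J A"
proof -
  let ?e = "\<lambda>k. if k = j then (1::'a) else 0"
  have "vn J ?e \<le> (\<Sum>k\<in>J. absv (?e k))" by (rule vn_le_sum[OF fJ])
  also have "\<dots> = (\<Sum>k\<in>J. if k = j then 1 else 0)" by (rule sum.cong) (auto simp: av_one)
  also have "\<dots> = 1" using fJ j by simp
  finally have "vn I (mv J A ?e) \<le> opn I J A" by (rule op_ge[OF fI fJ])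
  moreover have "mv J A ?e i = A i j" unfolding mv_def using fJ j
    by (simp add: if_distrib cong: if_cong)
  ultimately show ?thesis using vn_ge[OF fI i, of "mv J A ?e"] by simp
qed

lemma op_pos: "finite I \<Longrightarrow> finite J \<Longrightarrow> i \<in> I \<Longrightarrow> j \<in> J \<Longrightarrow> A i j \<noteq> 0 \<Longrightarrow> 0 < opn I J A"
  using op_entry[of I J i j A] av_zero[of "A i j"] av_nonneg[of "A i j"] by linarith

end

definition wedge :: "(nat \<Rightarrow> 'a::comm_ring_1) \<Rightarrow> (nat \<Rightarrow> 'a) \<Rightarrow> nat \<times> nat \<Rightarrow> 'a" where
  "wedge y w p = y (fst p) * w (snd p) - y (snd p) * w (fst p)"

lemma compound_identity:
  fixes h :: "nat \<Rightarrow> nat \<Rightarrow> 'a::comm_ring_1"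
  shows "mv (pairs m') (compound2 h) (wedge y w) (a, c) =
     mv {..<m'} h y a * mv {..<m'} h w c - mv {..<m'} h w a * mv {..<m'} h y c"
proof -
  define G where "G p = (h a (fst p) * h c (snd p) - h a (snd p) * h c (fst p)) * (y (fst p) * w (snd p))" for p
  have "(\<Sum>p\<in>{..<m'} \<times> {..<m'}. G p) = (\<Sum>p\<in>pairs m'. G p + G (snd p, fst p)) + (\<Sum>b<m'. G (b, b))"
    by (rule sq_split)
  also have "(\<Sum>b<m'. G (b, b)) = 0" by (simp add: G_def)
  also have "(\<Sum>p\<in>pairs m'. G p + G (snd p, fst p)) = mv (pairs m') (compound2 h) (wedge y w) (a, c)"
    unfolding mv_def by (rule sum.cong) (auto simp: G_def compound2_def wedge_def algebra_simps)
  finally have e1: "mv (pairs m') (compound2 h) (wedge y w) (a, c) = (\<Sum>p\<in>{..<m'} \<times> {..<m'}. G p)" by simp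
  have "(\<Sum>p\<in>{..<m'} \<times> {..<m'}. G p) = (\<Sum>b<m'. \<Sum>d<m'. G (b, d))"
    by (simp add: sum.cartesian_product)
  also have "\<dots> = (\<Sum>b<m'. \<Sum>d<m'. (h a b * y b) * (h c d * w d)) - (\<Sum>b<m'. \<Sum>d<m'. (h a d * w d) * (h c b * y b))"
    by (simp add: G_def sum_subtractf algebra_simps)
  also have "\<dots> = mv {..<m'} h y a * mv {..<m'} h w c - mv {..<m'} h w a * mv {..<m'} h y c"
  proof -
    have "(\<Sum>b<m'. \<Sum>d<m'. (h a b * y b) * (h c d * w d)) = mv {..<m'} h y a * mv {..<m'} h w c"
      by (simp add: mv_def sum_product)
    moreover have "(\<Sum>b<m'. \<Sum>d<m'. (h a d * w d) * (h c b * y b)) = mv {..<m'} h w a * mv {..<m'} h y c"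
      by (subst sum.swap) (simp add: mv_def sum_product)
    ultimately show ?thesis by simp
  qed
  finally show ?thesis using e1 by simp
qed

context absval begin

lemma wedge_bound:
  "vn (pairs m') (wedge y w) \<le> kap' kind * vn {..<m'} y * vn {..<m'} w"
proof -
  let ?Y = "\<lambda>b. absv (y b)" and ?W = "\<lambda>b. absv (w b)"
  have pt: "absv (wedge y w p) \<le> ?Y (fst p) * ?W (snd p) + ?Y (snd p) * ?W (fst p)" for p
    unfolding wedge_def using av_diff[of "y (fst p) * w (snd p)" "y (snd p) * w (fst p)"] by (simp add: av_mult)
  show ?thesis
  proof (cases kind)
    case Herm
    have "(\<Sum>p\<in>pairs m'. (absv (wedge y w p))\<^sup>2) \<le> (\<Sum>p\<in>pairs m'. 2 * ((?Y (fst p) * ?W (snd p))\<^sup>2 + (?Y (snd p) * ?W (fst p))\<^sup>2))"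
    proof (rule sum_mono)
      fix p
      have "(absv (wedge y w p))\<^sup>2 \<le> (?Y (fst p) * ?W (snd p) + ?Y (snd p) * ?W (fst p))\<^sup>2"
        using pt[of p] av_nonneg by (intro power_mono) auto
      also have "\<dots> \<le> 2 * ((?Y (fst p) * ?W (snd p))\<^sup>2 + (?Y (snd p) * ?W (fst p))\<^sup>2)"
      proof -
        have e: "(?Y (fst p) * ?W (snd p) + ?Y (snd p) * ?W (fst p))\<^sup>2 + (?Y (fst p) * ?W (snd p) - ?Y (snd p) * ?W (fst p))\<^sup>2
           = 2 * ((?Y (fst p) * ?W (snd p))\<^sup>2 + (?Y (snd p) * ?W (fst p))\<^sup>2)"
          by (simp add: power2_eq_square algebra_simps)
        have "0 \<le> (?Y (fst p) * ?W (snd p) - ?Y (snd p) * ?W (fst p))\<^sup>2" by simp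
        then show ?thesis using e by linarith
      qed
      finally show "(absv (wedge y w p))\<^sup>2 \<le> 2 * ((?Y (fst p) * ?W (snd p))\<^sup>2 + (?Y (snd p) * ?W (fst p))\<^sup>2)" .
    qed
    also have "\<dots> = 2 * ((\<Sum>p\<in>{..<m'} \<times> {..<m'}. (?Y (fst p) * ?W (snd p))\<^sup>2) - (\<Sum>b<m'. (?Y b * ?W b)\<^sup>2))"
      using sq_split[of "\<lambda>p. (?Y (fst p) * ?W (snd p))\<^sup>2" m'] by (simp add: sum_distrib_left)
    also have "\<dots> \<le> 2 * (\<Sum>p\<in>{..<m'} \<times> {..<m'}. (?Y (fst p) * ?W (snd p))\<^sup>2)"
      by (simp add: sum_nonneg)
    also have "(\<Sum>p\<in>{..<m'} \<times> {..<m'}. (?Y (fst p) * ?W (snd p))\<^sup>2) = (\<Sum>b<m'. (?Y b)\<^sup>2) * (\<Sum>b<m'. (?W b)\<^sup>2)"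
      by (simp add: sum_product sum.cartesian_product power_mult_distrib case_prod_beta')
    finally have "sqrt (\<Sum>p\<in>pairs m'. (absv (wedge y w p))\<^sup>2) \<le> sqrt (2 * ((\<Sum>b<m'. (?Y b)\<^sup>2) * (\<Sum>b<m'. (?W b)\<^sup>2)))"
      by (rule real_sqrt_le_mono)
    then show ?thesis using Herm by (simp add: vnorm_def kap'_def real_sqrt_mult mult.assoc)
  next
    case MaxN
    have fp: "finite (pairs m')" by simp
    have "\<forall>p\<in>pairs m'. absv (wedge y w p) \<le> 2 * vn {..<m'} y * vn {..<m'} w"
    proof
      fix p assume "p \<in> pairs m'"
      then have a: "fst p \<in> {..<m'}" "snd p \<in> {..<m'}" by (auto simp: pairs_def)
      have "?Y (fst p) * ?W (snd p) \<le> vn {..<m'} y * vn {..<m'} w"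
        using a vn_ge[of "{..<m'}"] av_nonneg vn_nonneg[of "{..<m'}"] by (intro mult_mono) auto
      moreover have "?Y (snd p) * ?W (fst p) \<le> vn {..<m'} y * vn {..<m'} w"
        using a vn_ge[of "{..<m'}"] av_nonneg vn_nonneg[of "{..<m'}"] by (intro mult_mono) auto
      ultimately show "absv (wedge y w p) \<le> 2 * vn {..<m'} y * vn {..<m'} w" using pt[of p] by linarith
    qed
    moreover have "0 \<le> 2 * vn {..<m'} y * vn {..<m'} w" using vn_nonneg[of "{..<m'}"] by simp
    ultimately have "Max (insert 0 ((\<lambda>p. absv (wedge y w p)) ` pairs m')) \<le> 2 * vn {..<m'} y * vn {..<m'} w"
      using maxn_le_iff[OF fp, of "\<lambda>p. absv (wedge y w p)"] by blast
    then show ?thesis using MaxN by (simp add: vnorm_def kap'_def)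
  qed
qed


lemma vec_ineq:
  fixes g h :: "nat \<Rightarrow> nat \<Rightarrow> 'a" and y w :: "nat \<Rightarrow> 'a" and m' :: nat
  defines "Q \<equiv> mv {..<m'} h y" and "z \<equiv> mv {..<m'} h w"
  shows "vn {..<p} (mv {..<m} g Q) * vn {..<m} z \<le> vn {..<p} (mv {..<m} g z) * vn {..<m} Q
     + 2 * opn {..<p} {..<m} g * opn (pairs m) (pairs m') (compound2 h) * vn {..<m'} y * vn {..<m'} w"
proof -
  define P where "P = {..<p}"
  define M where "M = {..<m}"
  define D where "D a c = Q a * z c - z a * Q c" for a c
  define T where "T i c = mv M g Q i * z c - mv M g z i * Q c" for i c
  define W where "W = opn (pairs m) (pairs m') (compound2 h)"
  define G where "G = opn P M g"
  have fP: "finite P" and fM: "finite M" by (simp_all add: P_def M_def)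
  have W0: "0 \<le> W" unfolding W_def by (rule op_nonneg) simp_all
  have G0: "0 \<le> G" unfolding G_def by (rule op_nonneg[OF fP fM])
  have T_eq: "T i c = mv M g (\<lambda>a. D a c) i" for i c
    by (simp add: mv_def D_def T_def right_diff_distrib sum_subtractf sum_distrib_right sum_distrib_left mult_ac)
  let ?aD = "\<lambda>q. absv (D (fst q) (snd q))"
  have step1: "rn kind (M \<times> M) ?aD \<le> kap kind * rn kind (pairs m) ?aD"
    unfolding M_def
  proof (rule rn_antisym)
    show "\<And>a c. absv (D (fst (a, c)) (snd (a, c))) = absv (D (fst (c, a)) (snd (c, a)))"
      using av_minus by (metis D_def fst_conv minus_diff_eq mult.commute snd_conv)
  qed (simp_all add: av_nonneg D_def)
  have "rn kind (pairs m) ?aD = vn (pairs m) (mv (pairs m') (compound2 h) (wedge y w))"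
    unfolding vnorm_rn
  proof (rule rn_cong)
    fix q assume "q \<in> pairs m"
    obtain a c where "q = (a, c)" by fastforce
    then show "absv (D (fst q) (snd q)) = absv (mv (pairs m') (compound2 h) (wedge y w) q)"
      by (simp add: compound_identity D_def Q_def z_def)
  qed
  also have "\<dots> \<le> W * vn (pairs m') (wedge y w)" unfolding W_def by (rule op_bound) simp_all
  also have "\<dots> \<le> W * (kap' kind * vn {..<m'} y * vn {..<m'} w)"
    using wedge_bound W0 by (rule mult_left_mono)
  finally have step2: "rn kind (pairs m) ?aD \<le> W * (kap' kind * vn {..<m'} y * vn {..<m'} w)" .
  have rnD: "rn kind (M \<times> M) ?aD \<le> 2 * W * vn {..<m'} y * vn {..<m'} w"
  proof -
    have "rn kind (M \<times> M) ?aD \<le> kap kind * (W * (kap' kind * vn {..<m'} y * vn {..<m'} w))"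
      using step1 step2 kap_prod(2)[of kind] by (meson mult_left_mono order_trans)
    also have "\<dots> = (kap kind * kap' kind) * W * vn {..<m'} y * vn {..<m'} w" by (simp add: algebra_simps)
    finally show ?thesis using kap_prod(1)[of kind] by simp
  qed
  let ?aT = "\<lambda>q. absv (T (fst q) (snd q))"
  have step3: "rn kind (P \<times> M) ?aT \<le> G * rn kind (M \<times> M) ?aD"
  proof (rule rn_col[OF fP fM fM G0])
    fix c assume "c \<in> M"
    have "rn kind P (\<lambda>a. ?aT (a, c)) = vn P (mv M g (\<lambda>a. D a c))"
      unfolding vnorm_rn by (rule rn_cong) (simp add: T_eq)
    also have "\<dots> \<le> G * vn M (\<lambda>a. D a c)" unfolding G_def by (rule op_bound[OF fP fM])
    also have "vn M (\<lambda>a. D a c) = rn kind M (\<lambda>b. ?aD (b, c))" by (simp add: vnorm_rn)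
    finally show "rn kind P (\<lambda>a. ?aT (a, c)) \<le> G * rn kind M (\<lambda>b. ?aD (b, c))" .
  qed (simp_all add: av_nonneg)
  let ?u = "mv M g Q" and ?v = "mv M g z"
  have "vn P ?u * vn M z = rn kind (P \<times> M) (\<lambda>q. absv (?u (fst q)) * absv (z (snd q)))"
    unfolding vnorm_rn by (rule rn_prod[symmetric, OF fP fM]) (simp_all add: av_nonneg)
  also have "\<dots> \<le> rn kind (P \<times> M) (\<lambda>q. ?aT q + absv (?v (fst q)) * absv (Q (snd q)))"
  proof (rule rn_mono)
    fix q
    have "?u (fst q) * z (snd q) = T (fst q) (snd q) + ?v (fst q) * Q (snd q)" by (simp add: T_def)
    then have "absv (?u (fst q) * z (snd q)) \<le> ?aT q + absv (?v (fst q) * Q (snd q))"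
      by (metis av_tri)
    then show "0 \<le> absv (?u (fst q)) * absv (z (snd q)) \<and>
          absv (?u (fst q)) * absv (z (snd q)) \<le> ?aT q + absv (?v (fst q)) * absv (Q (snd q))"
      by (simp add: av_mult av_nonneg)
  qed (simp add: fP fM)
  also have "\<dots> \<le> rn kind (P \<times> M) ?aT + rn kind (P \<times> M) (\<lambda>q. absv (?v (fst q)) * absv (Q (snd q)))"
    by (rule rn_triangle) (simp_all add: fP fM av_nonneg)
  also have "rn kind (P \<times> M) (\<lambda>q. absv (?v (fst q)) * absv (Q (snd q))) = vn P ?v * vn M Q"
    unfolding vnorm_rn by (rule rn_prod[OF fP fM]) (simp_all add: av_nonneg)
  finally have main: "vn P ?u * vn M z \<le> rn kind (P \<times> M) ?aT + vn P ?v * vn M Q" .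
  have "rn kind (P \<times> M) ?aT \<le> G * (2 * W * vn {..<m'} y * vn {..<m'} w)"
    using step3 rnD G0 by (meson mult_left_mono order_trans)
  with main show ?thesis unfolding P_def M_def G_def W_def by (simp add: algebra_simps)
qed


lemma op_mult_le:
  assumes fI: "finite I" and fJ: "finite J" and t: "0 \<le> t" and K: "0 \<le> K"
    and b: "\<And>x. vn J x \<le> 1 \<Longrightarrow> vn I (mv J A x) * t \<le> K"
  shows "opn I J A * t \<le> K"
proof (cases "t = 0")
  case True then show ?thesis using K by simp
next
  case False
  then have tp: "0 < t" using t by simp
  have "opn I J A \<le> K / t"
    by (rule op_least[OF fI fJ]) (use b tp in \<open>simp add: pos_le_divide_eq\<close>)
  then show ?thesis using tp by (simp add: pos_le_divide_eq)
qed

lemma star: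
  fixes g h f :: "nat \<Rightarrow> nat \<Rightarrow> 'a"
  shows "mnorm kind absv p m' (mmult m g h) * mnorm kind absv m q (mmult m' h f)
     \<le> mnorm kind absv p q (mmult m' (mmult m g h) f) * mnorm kind absv m m' h
        + 2 * mnorm kind absv p m g * wnorm kind absv m m' h * mnorm kind absv m' q f"
proof -
  define GH where "GH = mmult m g h"
  define HF where "HF = mmult m' h f"
  define GHF where "GHF = mmult m' GH f"
  define nGHF where "nGHF = opn {..<p} {..<q} GHF"
  define nH where "nH = opn {..<m} {..<m'} h"
  define nG where "nG = opn {..<p} {..<m} g"
  define nF where "nF = opn {..<m'} {..<q} f"
  define W where "W = opn (pairs m) (pairs m') (compound2 h)"
  define K where "K = nGHF * nH + 2 * nG * W * nF"
  have nn: "0 \<le> nGHF" "0 \<le> nH" "0 \<le> nG" "0 \<le> nF" "0 \<le> W"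
    unfolding nGHF_def nH_def nG_def nF_def W_def by (rule op_nonneg; simp)+
  have K0: "0 \<le> K" unfolding K_def using nn by simp
  have key: "vn {..<p} (mv {..<m'} GH y) * vn {..<m} (mv {..<q} HF x) \<le> K"
    if x: "vn {..<q} x \<le> 1" and y: "vn {..<m'} y \<le> 1" for x y
  proof -
    define w where "w = mv {..<q} f x"
    have e1: "mv {..<m'} GH y = mv {..<m} g (mv {..<m'} h y)" by (simp add: GH_def mv_mmult)
    have e2: "mv {..<q} HF x = mv {..<m'} h w" by (simp add: HF_def w_def mv_mmult)
    have e3: "mv {..<m} g (mv {..<m'} h w) = mv {..<q} GHF x" by (simp add: GHF_def GH_def w_def mv_mmult)
    have vx: "0 \<le> vn {..<q} x" and vy: "0 \<le> vn {..<m'} y" by (simp_all add: vn_nonneg)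
    have b1: "vn {..<p} (mv {..<q} GHF x) \<le> nGHF"
      using op_bound[of "{..<p}" "{..<q}" GHF x] x nn(1) unfolding nGHF_def
      by (smt (verit) finite_lessThan mult_left_le)
    have b2: "vn {..<m} (mv {..<m'} h y) \<le> nH"
      using op_bound[of "{..<m}" "{..<m'}" h y] y nn(2) unfolding nH_def
      by (smt (verit) finite_lessThan mult_left_le)
    have b3: "vn {..<m'} w \<le> nF"
      using op_bound[of "{..<m'}" "{..<q}" f x] x nn(4) unfolding nF_def w_def
      by (smt (verit) finite_lessThan mult_left_le)
    have "vn {..<p} (mv {..<m'} GH y) * vn {..<m} (mv {..<q} HF x)
        \<le> vn {..<p} (mv {..<m} g (mv {..<m'} h w)) * vn {..<m} (mv {..<m'} h y)
          + 2 * nG * W * vn {..<m'} y * vn {..<m'} w"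
      unfolding e1 e2 nG_def W_def by (rule vec_ineq)
    also have "\<dots> \<le> nGHF * nH + 2 * nG * W * 1 * nF"
    proof (rule add_mono)
      show "vn {..<p} (mv {..<m} g (mv {..<m'} h w)) * vn {..<m} (mv {..<m'} h y) \<le> nGHF * nH"
        unfolding e3 using b1 b2 nn by (intro mult_mono) (simp_all add: vn_nonneg)
      show "2 * nG * W * vn {..<m'} y * vn {..<m'} w \<le> 2 * nG * W * 1 * nF"
        using nn y b3 vy by (intro mult_mono) (simp_all add: vn_nonneg)
    qed
    finally show ?thesis unfolding K_def by simp
  qed
  have "opn {..<p} {..<m'} GH * vn {..<m} (mv {..<q} HF x) \<le> K" if x: "vn {..<q} x \<le> 1" for x
    by (rule op_mult_le) (use key[OF x] K0 in \<open>simp_all add: vn_nonneg\<close>)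
  then have "opn {..<m} {..<q} HF * opn {..<p} {..<m'} GH \<le> K"
    by (intro op_mult_le) (simp_all add: K0 op_nonneg mult.commute)
  then show ?thesis
    unfolding mnorm_def wnorm_def K_def nGHF_def nH_def nG_def nF_def W_def GHF_def GH_def HF_def
    by (simp add: mult.commute)
qed

end


lemma arith_step:
  fixes e X Y S Z W Nh Nf :: real
  assumes e: "0 < e" and Nh: "0 < Nh" and X0: "0 \<le> X" and Y0: "0 \<le> Y" and Nf: "0 \<le> Nf"
    and S: "e * Nh * Nf \<le> S" and W: "W \<le> e\<^sup>2 / 12 * Nh\<^sup>2"
    and XY: "3 * e / 4 * Y * Nh \<le> X" and main: "X * S \<le> Z * Nh + 2 * Y * W * Nf"
  shows "3 * e / 4 * X * Nf \<le> Z"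
proof -
  have h1: "X * (e * Nh * Nf) \<le> X * S" using S X0 by (rule mult_left_mono)
  have "2 * Y * Nf \<ge> 0" using Y0 Nf by simp
  then have h2: "(2 * Y * Nf) * W \<le> (2 * Y * Nf) * (e\<^sup>2 / 12 * Nh\<^sup>2)" by (rule mult_left_mono[OF W])
  have "0 \<le> 2 * e / 9 * Nh * Nf" using e Nh Nf by simp
  then have h4: "(3 * e / 4 * Y * Nh) * (2 * e / 9 * Nh * Nf) \<le> X * (2 * e / 9 * Nh * Nf)"
    by (rule mult_right_mono[OF XY])
  have "Nh * (e * X * Nf) \<le> Nh * (Z + 2 * e / 9 * X * Nf)"
    using h1 h2 h4 main by (simp add: algebra_simps power2_eq_square)
  then have h5: "e * X * Nf \<le> Z + 2 * e / 9 * X * Nf" using Nh by simp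
  have "0 \<le> e * X * Nf" using e X0 Nf by simp
  then show ?thesis using h5 by (simp add: algebra_simps)
qed

lemma arith_final:
  fixes e A B Y R Z W Nh :: real
  assumes e: "0 < e" and Nh: "0 < Nh" and Y0: "0 \<le> Y" and R0: "0 \<le> R" and B0: "0 \<le> B"
    and W: "W \<le> e\<^sup>2 / 12 * Nh\<^sup>2"
    and A: "3 * e / 4 * Y * Nh \<le> A" and B: "3 * e / 4 * Nh * R \<le> B"
    and main: "A * B \<le> Z * Nh + 2 * Y * W * R"
  shows "e / 2 * Y * B \<le> Z"
proof -
  have "0 \<le> B" by (rule B0)
  then have h1: "(3 * e / 4 * Y * Nh) * B \<le> A * B" by (rule mult_right_mono[OF A])
  have "2 * Y * R \<ge> 0" using Y0 R0 by simp
  then have h2: "(2 * Y * R) * W \<le> (2 * Y * R) * (e\<^sup>2 / 12 * Nh\<^sup>2)" by (rule mult_left_mono[OF W])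
  have "0 \<le> 2 * e / 9 * Y * Nh" using e Nh Y0 by simp
  then have h4: "(2 * e / 9 * Y * Nh) * (3 * e / 4 * Nh * R) \<le> (2 * e / 9 * Y * Nh) * B"
    by (rule mult_left_mono[OF B])
  have "Nh * (3 * e / 4 * Y * B) \<le> Nh * (Z + 2 * e / 9 * Y * B)"
    using h1 h2 h4 main by (simp add: algebra_simps power2_eq_square)
  then have h5: "3 * e / 4 * Y * B \<le> Z + 2 * e / 9 * Y * B" using Nh by simp
  have "0 \<le> e * Y * B" using e Y0 B0 by simp
  then show ?thesis using h5 by (simp add: algebra_simps)
qed

lemma cprod_cons: "cprod g d a (Suc l) = mmult (d (Suc a)) (g a) (cprod g d (Suc a) l)"
proof (induction l)
  case 0
  then show ?case by simp
next
  case (Suc l)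
  have "cprod g d a (Suc (Suc l)) = mmult (d (a + Suc (Suc l))) (cprod g d a (Suc l)) (g (a + Suc (Suc l)))"
    by simp
  also have "\<dots> = mmult (d (Suc a)) (g a) (mmult (d (a + Suc (Suc l))) (cprod g d (Suc a) l) (g (a + Suc (Suc l))))"
    unfolding Suc.IH by (rule mmult_assoc)
  also have "mmult (d (a + Suc (Suc l))) (cprod g d (Suc a) l) (g (a + Suc (Suc l))) = cprod g d (Suc a) (Suc l)"
    by simp
  finally show ?case .
qed


context absval begin

abbreviation mn where "mn \<equiv> mnorm kind absv"
abbreviation wn where "wn \<equiv> wnorm kind absv"

lemma mn_nonneg: "0 \<le> mn r c A"
  unfolding mnorm_def by (rule op_nonneg) simp_all

lemma main_lemma:
  fixes \<epsilon> :: real and n :: nat and d :: "nat \<Rightarrow> nat" and g :: "nat \<Rightarrow> nat \<Rightarrow> nat \<Rightarrow> 'a"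
  assumes H: "0 < \<epsilon> \<and> \<epsilon> \<le> 1 \<and> (\<forall>k\<le>n. nonzero_mat (d k) (d (Suc k)) (g k)) \<and>
       (\<forall>k. 1 \<le> k \<and> k \<le> n - 1 \<longrightarrow> sigma kind absv (d k) (d (Suc k)) (g k) \<le> \<epsilon>\<^sup>2 / 12) \<and>
       (\<forall>k<n. aligned kind absv \<epsilon> (d k) (d (Suc k)) (d (Suc (Suc k))) (g k) (g (Suc k)))"
  shows "\<forall>k. 1 \<le> k \<and> k \<le> n \<longrightarrow> aligned kind absv (\<epsilon> / 2) (d 0) (d k) (d (Suc n)) (cprod g d 0 (k - 1)) (cprod g d k (n - k))"
proof -
  have e0: "0 < \<epsilon>" using H by blast
  define N where "N k = mn (d k) (d (Suc k)) (g k)" for k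
  define Wn where "Wn k = wn (d k) (d (Suc k)) (g k)" for k
  define L where "L j = cprod g d 0 j" for j
  define R where "R j = cprod g d j (n - j)" for j
  define c where "c = 3 * \<epsilon> / 4"
  have Npos: "0 < N k" if "k \<le> n" for k
  proof -
    have "nonzero_mat (d k) (d (Suc k)) (g k)" using H that by blast
    then obtain i j where "i < d k" "j < d (Suc k)" "g k i j \<noteq> 0" unfolding nonzero_mat_def by blast
    then show ?thesis unfolding N_def mnorm_def by (intro op_pos[of _ _ i j]) simp_all
  qed
  have Wb: "Wn k \<le> \<epsilon>\<^sup>2 / 12 * (N k)\<^sup>2" if "1 \<le> k" "k \<le> n - 1" for k
  proof -
    have "sigma kind absv (d k) (d (Suc k)) (g k) \<le> \<epsilon>\<^sup>2 / 12" using H that by blast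
    then have "Wn k / (N k)\<^sup>2 \<le> \<epsilon>\<^sup>2 / 12" by (simp add: sigma_def Wn_def N_def)
    moreover have "k \<le> n" using that by simp
    then have "0 < (N k)\<^sup>2" using Npos[of k] by simp
    ultimately show ?thesis by (simp add: pos_divide_le_eq)
  qed
  have al: "\<epsilon> * N k * N (Suc k) \<le> mn (d k) (d (Suc (Suc k))) (mmult (d (Suc k)) (g k) (g (Suc k)))"
    if "k < n" for k
    using H that unfolding aligned_def N_def by blast
  have LI: "c * mn (d 0) (d (Suc j)) (L j) * N (Suc j) \<le> mn (d 0) (d (Suc (Suc j))) (mmult (d (Suc j)) (L j) (g (Suc j)))"
    if "j < n" for j
    using that
  proof (induction j)
    case 0
    have "c * N 0 * N (Suc 0) \<le> \<epsilon> * N 0 * N (Suc 0)"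
      using Npos[of 0] Npos[of 1] 0 e0 by (intro mult_right_mono) (simp_all add: c_def)
    then show ?case using al[of 0] 0 by (simp add: L_def N_def)
  next
    case (Suc j)
    let ?h = "g (Suc j)" and ?f = "g (Suc (Suc j))"
    have LS: "L (Suc j) = mmult (d (Suc j)) (L j) ?h" by (simp add: L_def)
    have st: "mn (d 0) (d (Suc (Suc j))) (mmult (d (Suc j)) (L j) ?h) * mn (d (Suc j)) (d (Suc (Suc (Suc j)))) (mmult (d (Suc (Suc j))) ?h ?f)
      \<le> mn (d 0) (d (Suc (Suc (Suc j)))) (mmult (d (Suc (Suc j))) (mmult (d (Suc j)) (L j) ?h) ?f) * mn (d (Suc j)) (d (Suc (Suc j))) ?h
        + 2 * mn (d 0) (d (Suc j)) (L j) * wn (d (Suc j)) (d (Suc (Suc j))) ?h * mn (d (Suc (Suc j))) (d (Suc (Suc (Suc j)))) ?f"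
      by (rule star)
    have "c * mn (d 0) (d (Suc (Suc j))) (mmult (d (Suc j)) (L j) ?h) * N (Suc (Suc j))
        \<le> mn (d 0) (d (Suc (Suc (Suc j)))) (mmult (d (Suc (Suc j))) (mmult (d (Suc j)) (L j) ?h) ?f)"
      unfolding c_def
    proof (rule arith_step[where W = "Wn (Suc j)" and Nh = "N (Suc j)" and Y = "mn (d 0) (d (Suc j)) (L j)"
          and S = "mn (d (Suc j)) (d (Suc (Suc (Suc j)))) (mmult (d (Suc (Suc j))) ?h ?f)"])
      show "0 < \<epsilon>" by (rule e0)
      show "0 < N (Suc j)" using Suc by (intro Npos) simp
      have "Suc (Suc j) \<le> n" using Suc.prems by simp
      then show "0 \<le> N (Suc (Suc j))" using Npos[of "Suc (Suc j)"] by simp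
      show "\<epsilon> * N (Suc j) * N (Suc (Suc j)) \<le> mn (d (Suc j)) (d (Suc (Suc (Suc j)))) (mmult (d (Suc (Suc j))) ?h ?f)"
        using al[of "Suc j"] Suc by simp
      show "Wn (Suc j) \<le> \<epsilon>\<^sup>2 / 12 * (N (Suc j))\<^sup>2" using Suc by (intro Wb) simp_all
      show "3 * \<epsilon> / 4 * mn (d 0) (d (Suc j)) (L j) * N (Suc j) \<le> mn (d 0) (d (Suc (Suc j))) (mmult (d (Suc j)) (L j) ?h)"
        using Suc by (simp add: c_def)
      show "mn (d 0) (d (Suc (Suc j))) (mmult (d (Suc j)) (L j) ?h) * mn (d (Suc j)) (d (Suc (Suc (Suc j)))) (mmult (d (Suc (Suc j))) ?h ?f)
        \<le> mn (d 0) (d (Suc (Suc (Suc j)))) (mmult (d (Suc (Suc j))) (mmult (d (Suc j)) (L j) ?h) ?f) * N (Suc j)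
          + 2 * mn (d 0) (d (Suc j)) (L j) * Wn (Suc j) * N (Suc (Suc j))"
        using st by (simp add: N_def Wn_def)
    qed (simp_all add: mn_nonneg)
    then show ?case by (simp add: LS)
  qed
  have RI: "c * N i * mn (d (Suc i)) (d (Suc n)) (R (Suc i)) \<le> mn (d i) (d (Suc n)) (mmult (d (Suc i)) (g i) (R (Suc i)))"
    if "i < n" for i
  proof -
    have "i \<le> n - 1" using that by simp
    then show ?thesis
    proof (induction i rule: inc_induct)
      case base
      have nn: "Suc (n - 1) = n" using that by simp
      have Rn: "R n = g n" by (simp add: R_def)
      have "c * N (n - 1) * N n \<le> \<epsilon> * N (n - 1) * N n"
        using Npos[of "n - 1"] Npos[of n] e0 by (intro mult_right_mono) (simp_all add: c_def)
      also have "\<dots> \<le> mn (d (n - 1)) (d (Suc n)) (mmult (d n) (g (n - 1)) (g n))"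
        using al[of "n - 1"] that nn by simp
      finally show ?case using nn Rn by (simp add: N_def)
    next
      case (step k)
      let ?h = "g (Suc k)" and ?R = "R (Suc (Suc k))"
      have kn: "Suc (Suc k) \<le> n" using step.hyps by simp
      have RS: "R (Suc k) = mmult (d (Suc (Suc k))) ?h ?R"
      proof -
        have e: "n - Suc k = Suc (n - Suc (Suc k))" using kn by simp
        show ?thesis unfolding R_def e by (rule cprod_cons)
      qed
      have st: "mn (d k) (d (Suc (Suc k))) (mmult (d (Suc k)) (g k) ?h) * mn (d (Suc k)) (d (Suc n)) (mmult (d (Suc (Suc k))) ?h ?R)
        \<le> mn (d k) (d (Suc n)) (mmult (d (Suc (Suc k))) (mmult (d (Suc k)) (g k) ?h) ?R) * mn (d (Suc k)) (d (Suc (Suc k))) ?h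
          + 2 * mn (d k) (d (Suc k)) (g k) * wn (d (Suc k)) (d (Suc (Suc k))) ?h * mn (d (Suc (Suc k))) (d (Suc n)) ?R"
        by (rule star)
      have "c * mn (d (Suc k)) (d (Suc n)) (mmult (d (Suc (Suc k))) ?h ?R) * N k
          \<le> mn (d k) (d (Suc n)) (mmult (d (Suc (Suc k))) (mmult (d (Suc k)) (g k) ?h) ?R)"
        unfolding c_def
      proof (rule arith_step[where W = "Wn (Suc k)" and Nh = "N (Suc k)" and Y = "mn (d (Suc (Suc k))) (d (Suc n)) ?R"
            and S = "mn (d k) (d (Suc (Suc k))) (mmult (d (Suc k)) (g k) ?h)"])
        show "0 < \<epsilon>" by (rule e0)
        show "0 < N (Suc k)" using kn by (intro Npos) simp
        show "0 \<le> N k" using Npos[of k] kn by simp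
        show "\<epsilon> * N (Suc k) * N k \<le> mn (d k) (d (Suc (Suc k))) (mmult (d (Suc k)) (g k) ?h)"
          using al[of k] kn by (simp add: mult_ac)
        show "Wn (Suc k) \<le> \<epsilon>\<^sup>2 / 12 * (N (Suc k))\<^sup>2" using kn by (intro Wb) simp_all
        show "3 * \<epsilon> / 4 * mn (d (Suc (Suc k))) (d (Suc n)) ?R * N (Suc k) \<le> mn (d (Suc k)) (d (Suc n)) (mmult (d (Suc (Suc k))) ?h ?R)"
          using step.IH by (simp add: c_def mult_ac)
        show "mn (d (Suc k)) (d (Suc n)) (mmult (d (Suc (Suc k))) ?h ?R) * mn (d k) (d (Suc (Suc k))) (mmult (d (Suc k)) (g k) ?h)
          \<le> mn (d k) (d (Suc n)) (mmult (d (Suc (Suc k))) (mmult (d (Suc k)) (g k) ?h) ?R) * N (Suc k)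
            + 2 * mn (d (Suc (Suc k))) (d (Suc n)) ?R * Wn (Suc k) * N k"
          using st by (simp add: N_def Wn_def mult_ac)
      qed (simp_all add: mn_nonneg)
      then show ?case by (simp add: RS mmult_assoc mult_ac N_def)
    qed
  qed
  show "\<forall>k. 1 \<le> k \<and> k \<le> n \<longrightarrow> aligned kind absv (\<epsilon> / 2) (d 0) (d k) (d (Suc n)) (cprod g d 0 (k - 1)) (cprod g d k (n - k))"
  proof (intro allI impI, elim conjE)
    fix k assume k1: "1 \<le> k" and kn: "k \<le> n"
    obtain j where kj: "k = Suc j" using k1 by (cases k) auto
    have Lk: "cprod g d 0 (k - 1) = L j" by (simp add: L_def kj)
    show "aligned kind absv (\<epsilon> / 2) (d 0) (d k) (d (Suc n)) (cprod g d 0 (k - 1)) (cprod g d k (n - k))"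
    proof (cases "k = n")
      case True
      have Rk: "cprod g d k (n - k) = g k" using True by simp
      have "\<epsilon> / 2 * mn (d 0) (d (Suc j)) (L j) * N (Suc j) \<le> c * mn (d 0) (d (Suc j)) (L j) * N (Suc j)"
        using mn_nonneg[of "d 0" "d (Suc j)" "L j"] Npos[of "Suc j"] kn kj e0
        by (intro mult_right_mono) (simp_all add: c_def)
      also have "\<dots> \<le> mn (d 0) (d (Suc (Suc j))) (mmult (d (Suc j)) (L j) (g (Suc j)))"
        using LI[of j] kn kj by simp
      finally show ?thesis unfolding aligned_def Lk Rk using True kj by (simp add: N_def)
    next
      case False
      then have kn': "k < n" using kn by simp
      let ?h = "g k" and ?R = "R (Suc k)"
      have RS: "cprod g d k (n - k) = mmult (d (Suc k)) ?h ?R"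
      proof -
        have e: "n - k = Suc (n - Suc k)" using kn' by simp
        show ?thesis unfolding R_def e by (rule cprod_cons)
      qed
      have st: "mn (d 0) (d (Suc k)) (mmult (d k) (L j) ?h) * mn (d k) (d (Suc n)) (mmult (d (Suc k)) ?h ?R)
        \<le> mn (d 0) (d (Suc n)) (mmult (d (Suc k)) (mmult (d k) (L j) ?h) ?R) * mn (d k) (d (Suc k)) ?h
          + 2 * mn (d 0) (d k) (L j) * wn (d k) (d (Suc k)) ?h * mn (d (Suc k)) (d (Suc n)) ?R"
        by (rule star)
      have "\<epsilon> / 2 * mn (d 0) (d k) (L j) * mn (d k) (d (Suc n)) (mmult (d (Suc k)) ?h ?R)
          \<le> mn (d 0) (d (Suc n)) (mmult (d (Suc k)) (mmult (d k) (L j) ?h) ?R)"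
      proof (rule arith_final[where W = "Wn k" and Nh = "N k" and R = "mn (d (Suc k)) (d (Suc n)) ?R"
            and A = "mn (d 0) (d (Suc k)) (mmult (d k) (L j) ?h)"])
        show "0 < \<epsilon>" by (rule e0)
        show "0 < N k" using kn by (intro Npos) simp
        show "Wn k \<le> \<epsilon>\<^sup>2 / 12 * (N k)\<^sup>2" using kn' k1 by (intro Wb) simp_all
        show "3 * \<epsilon> / 4 * mn (d 0) (d k) (L j) * N k \<le> mn (d 0) (d (Suc k)) (mmult (d k) (L j) ?h)"
          using LI[of j] kn kj by (simp add: c_def)
        show "3 * \<epsilon> / 4 * N k * mn (d (Suc k)) (d (Suc n)) ?R \<le> mn (d k) (d (Suc n)) (mmult (d (Suc k)) ?h ?R)"
          using RI[of k] kn' by (simp add: c_def)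
        show "mn (d 0) (d (Suc k)) (mmult (d k) (L j) ?h) * mn (d k) (d (Suc n)) (mmult (d (Suc k)) ?h ?R)
          \<le> mn (d 0) (d (Suc n)) (mmult (d (Suc k)) (mmult (d k) (L j) ?h) ?R) * N k
            + 2 * mn (d 0) (d k) (L j) * Wn k * mn (d (Suc k)) (d (Suc n)) ?R"
          using st by (simp add: N_def Wn_def)
      qed (simp_all add: mn_nonneg)
      then show ?thesis unfolding aligned_def Lk RS by (simp add: mmult_assoc)
    qed
  qed
qed


lemma main_claim: "lemma2p15_claim kind absv"
  unfolding lemma2p15_claim_def using main_lemma by blast

end


lemma herm_absval: "absval Herm (norm :: 'a::real_normed_field \<Rightarrow> real)"
proof
  fix r :: real assume "0 < r"
  then have "norm (of_real r :: 'a) = r" by simp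
  then show "\<exists>c::'a. norm c = r" by blast
qed (simp_all add: norm_mult norm_triangle_ineq)

lemma maxn_absval:
  fixes v :: "'b::field \<Rightarrow> real"
  assumes "na_local_field v"
  shows "absval MaxN v"
proof -
  have nn: "\<And>x. 0 \<le> v x" and z: "\<And>x. v x = 0 \<longleftrightarrow> x = 0" and m: "\<And>x y. v (x * y) = v x * v y"
    and u: "\<And>x y. v (x + y) \<le> max (v x) (v y)"
    using assms unfolding na_local_field_def by blast+
  have v1: "v 1 = 1"
  proof -
    have "v 1 = v 1 * v 1" using m[of 1 1] by simp
    moreover have "v 1 \<noteq> 0" using z[of 1] by simp
    ultimately show ?thesis by simp
  qed
  show ?thesis
  proof
    fix x y :: 'b
    show "v (x + y) \<le> v x + v y" using u[of x y] nn[of x] nn[of y] by linarith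
  next
    fix x :: 'b assume "x \<noteq> 0"
    then have "v (inverse x) * v x = 1" using m[of "inverse x" x] v1 by simp
    then show "\<exists>c. v c * v x = 1" by blast
  qed (simp_all add: nn z m)
qed

theorem lemma2p15:
  shows "lemma2p15_claim Herm (norm :: 'a::real_normed_field \<Rightarrow> real) \<and>
         (\<forall>v :: 'b::field \<Rightarrow> real. na_local_field v \<longrightarrow> lemma2p15_claim MaxN v)"
  using absval.main_claim[OF herm_absval] absval.main_claim[OF maxn_absval] by blast

end
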